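(* Consider the cache-aided packet-erasure broadcast network described in the context with $K_\mathrm{w}=K_\mathrm{s}=1$, $D=2$ and equal erasure probabilities $\delta_\mathrm{w}=\delta_\mathrm{s}=\delta$. Then \[ C(M)=\begin{cases}\tfrac12F(1-\delta)+\tfrac M2,&\tfrac M2\in\big[0,\tfrac12F(1-\delta)\big],\\[1mm] F(1-\delta),&\tfrac M2\in\big(\tfrac12F(1-\delta),\,F(1-\delta)\big].\end{cases} \]
   Context: Setting: a memoryless packet-erasure broadcast channel with input alphabet $\mathcal X=\{0,1\}^F$ ($F$ a positive integer) and two receivers, each of which independently-in-marginal observes $Y_k=x$ with probability $1-\delta$ and an erasure symbol $\Delta$ with probability $\delta$, where $0<\delta<1$. The library consists of $D=2$ independent messages $W_1,W_2$, each uniform on $\{1,\dots,\lfloor 2^{nR}\rfloor\}$. Caching phase (demands unknown): receiver 1 stores $V_1=g_1(W_1,W_2)\in\{1,\dots,\lfloor2^{nM}\rfloor\}$; receiver 2 has no cache. Delivery: an arbitrary demand vector $(d_1,d_2)\in\{1,2\}^2$ is known to all; the transmitter sends $X^n=f_{\mathbf d}(W_1,W_2)$; receiver 1 decodes $W_{d_1}$ from $(Y_1^n,V_1)$ and receiver 2 decodes $W_{d_2}$ from $Y_2^n$. $(R,M)$ is achievable if for every $\epsilon>0$ there exist $n$ and such functions with worst-case (over all demand vectors) probability that some receiver errs $<\epsilon$. $C(M)$ is the supremum of achievable $R$ for memory $M$. *)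

theory Defs
  imports "HOL-Probability.Probability"
begin

text \<open>Per channel use the
  erasure events of the two receivers are drawn i.i.d. from a joint pmf q on
  bool \<times> bool (True = erased); fst = receiver 1 (with cache), snd = receiver 2.\<close>

definition msg_size :: "nat \<Rightarrow> real \<Rightarrow> nat" where
  "msg_size n R = nat \<lfloor>2 powr (real n * R)\<rfloor>"

definition sel :: "nat \<Rightarrow> nat \<Rightarrow> nat \<Rightarrow> nat" where
  "sel k w1 w2 = (if k = 1 then w1 else w2)"

definition src_pmf :: "nat \<Rightarrow> nat \<Rightarrow> (bool \<times> bool) pmf \<Rightarrow> (nat \<times> nat \<times> (nat \<Rightarrow> bool \<times> bool)) pmf" where
  "src_pmf n L q =
     do { w1 \<leftarrow> pmf_of_set {1..L};
          w2 \<leftarrow> pmf_of_set {1..L};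
          E \<leftarrow> Pi_pmf {..<n} (False, False) (\<lambda>_. q);
          return_pmf (w1, w2, E) }"

text \<open>Probability that some receiver errs, for demand vector d.
  f d w1 w2 i : channel input at time i; g w1 w2 : cache content of receiver 1;
  dec1 d y v : decoder of receiver 1; dec2 d y : decoder of receiver 2.\<close>
definition err_prob ::
  "nat \<Rightarrow> nat \<Rightarrow> (bool \<times> bool) pmf
   \<Rightarrow> (nat \<times> nat \<Rightarrow> nat \<Rightarrow> nat \<Rightarrow> nat \<Rightarrow> bool list)
   \<Rightarrow> (nat \<Rightarrow> nat \<Rightarrow> nat)
   \<Rightarrow> (nat \<times> nat \<Rightarrow> (nat \<Rightarrow> bool list option) \<Rightarrow> nat \<Rightarrow> nat)
   \<Rightarrow> (nat \<times> nat \<Rightarrow> (nat \<Rightarrow> bool list option) \<Rightarrow> nat)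
   \<Rightarrow> nat \<times> nat \<Rightarrow> real" where
  "err_prob n L q f g dec1 dec2 d =
     measure_pmf.prob (src_pmf n L q)
       {(w1, w2, E).
          let x = f d w1 w2;
              Y1 = (\<lambda>i. if i < n \<and> \<not> fst (E i) then Some (x i) else None);
              Y2 = (\<lambda>i. if i < n \<and> \<not> snd (E i) then Some (x i) else None)
          in dec1 d Y1 (g w1 w2) \<noteq> sel (fst d) w1 w2 \<or> dec2 d Y2 \<noteq> sel (snd d) w1 w2}"

definition valid_code ::
  "nat \<Rightarrow> nat \<Rightarrow> nat \<Rightarrow> nat \<Rightarrow> (nat \<times> nat \<Rightarrow> nat \<Rightarrow> nat \<Rightarrow> nat \<Rightarrow> bool list)
   \<Rightarrow> (nat \<Rightarrow> nat \<Rightarrow> nat) \<Rightarrow> bool" where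
  "valid_code F n L Lc f g \<longleftrightarrow>
     (\<forall>d w1 w2 i. length (f d w1 w2 i) = F) \<and>
     (\<forall>w1\<in>{1..L}. \<forall>w2\<in>{1..L}. g w1 w2 \<in> {1..Lc})"

definition achievable :: "nat \<Rightarrow> (bool \<times> bool) pmf \<Rightarrow> real \<Rightarrow> real \<Rightarrow> bool" where
  "achievable F q R M \<longleftrightarrow>
     (\<forall>\<epsilon>>0. \<forall>N. \<exists>n\<ge>N. \<exists>f g dec1 dec2.
        valid_code F n (msg_size n R) (msg_size n M) f g \<and>
        (\<forall>d\<in>{1,2} \<times> {1,2}. err_prob n (msg_size n R) q f g dec1 dec2 d < \<epsilon>))"

definition capacity :: "nat \<Rightarrow> (bool \<times> bool) pmf \<Rightarrow> real \<Rightarrow> real" where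
  "capacity F q M = Sup {R. achievable F q R M}"

end

theory Submission
  imports Defs
begin

lemma prob_bind_pmf:
  "measure_pmf.prob (bind_pmf M N) X = measure_pmf.expectation M (\<lambda>x. measure_pmf.prob (N x) X)"
proof -
  have int: "integrable (measure_pmf M) (\<lambda>x. measure_pmf.prob (N x) X)"
    by (rule measure_pmf.integrable_const_bound[where B=1]) auto
  have "ennreal (measure_pmf.prob (bind_pmf M N) X) = (\<integral>\<^sup>+x. ennreal (measure_pmf.prob (N x) X) \<partial>M)"
    by (simp add: measure_pmf.emeasure_eq_measure[symmetric])
  also have "\<dots> = ennreal (measure_pmf.expectation M (\<lambda>x. measure_pmf.prob (N x) X))"
    by (rule nn_integral_eq_integral[OF int]) auto
  finally show ?thesis
    by (subst (asm) ennreal_inj) (auto intro: integral_nonneg_AE)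
qed

definition Pb :: "nat \<Rightarrow> real \<Rightarrow> (nat \<Rightarrow> bool) pmf" where
  "Pb n \<delta> = Pi_pmf {..<n} False (\<lambda>_. bernoulli_pmf \<delta>)"

definition srcb :: "nat \<Rightarrow> nat \<Rightarrow> real \<Rightarrow> (nat \<times> nat \<times> (nat \<Rightarrow> bool)) pmf" where
  "srcb n L \<delta> = bind_pmf (Pb n \<delta>) (\<lambda>B. map_pmf (\<lambda>(w1,w2). (w1,w2,B)) (pair_pmf (pmf_of_set {1..L}) (pmf_of_set {1..L})))"

lemma bool_pmf_eq_bernoulli:
  fixes p :: "bool pmf"
  assumes "measure_pmf.prob p {True} = \<delta>"
  shows "p = bernoulli_pmf \<delta>"
proof -
  have d: "0 \<le> \<delta>" "\<delta> \<le> 1" using assms by auto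
  have t: "pmf p True = \<delta>" using assms by (simp add: measure_pmf_single)
  have f: "pmf p False = 1 - \<delta>"
  proof -
    have "measure_pmf.prob p {True} + measure_pmf.prob p {False} = measure_pmf.prob p UNIV"
      by (subst measure_pmf.finite_measure_Union[symmetric]) (auto simp: UNIV_bool)
    thus ?thesis using t by (simp add: measure_pmf_single)
  qed
  show ?thesis
    by (rule pmf_eqI) (case_tac i, auto simp: t f d)
qed

lemma src_reduce:
  assumes "\<phi> (False, False) = False" and "map_pmf \<phi> q = bernoulli_pmf \<delta>"
  shows "map_pmf (\<lambda>(w1,w2,E). (w1,w2,\<phi> \<circ> E)) (src_pmf n L q) = srcb n L \<delta>"
proof -
  define U where "U = pmf_of_set {1..L}"
  define P where "P = Pi_pmf {..<n} (False,False) (\<lambda>_. q)"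
  have pb: "Pb n \<delta> = map_pmf (\<lambda>h. \<phi> \<circ> h) P"
    unfolding Pb_def P_def using assms by (subst Pi_pmf_map[symmetric]) auto
  have "map_pmf (\<lambda>(w1,w2,E). (w1,w2,\<phi> \<circ> E)) (src_pmf n L q)
      = U \<bind> (\<lambda>w1. U \<bind> (\<lambda>w2. P \<bind> (\<lambda>E. return_pmf (w1,w2,\<phi> \<circ> E))))"
    unfolding src_pmf_def U_def P_def by (simp add: map_bind_pmf)
  also have "\<dots> = U \<bind> (\<lambda>w1. U \<bind> (\<lambda>w2. Pb n \<delta> \<bind> (\<lambda>B. return_pmf (w1,w2,B))))"
    unfolding pb by (simp add: bind_map_pmf)
  also have "\<dots> = U \<bind> (\<lambda>w1. Pb n \<delta> \<bind> (\<lambda>B. U \<bind> (\<lambda>w2. return_pmf (w1,w2,B))))"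
    by (subst bind_commute_pmf) (rule refl)
  also have "\<dots> = Pb n \<delta> \<bind> (\<lambda>B. U \<bind> (\<lambda>w1. U \<bind> (\<lambda>w2. return_pmf (w1,w2,B))))"
    by (rule bind_commute_pmf)
  also have "\<dots> = srcb n L \<delta>"
    unfolding srcb_def U_def pair_pmf_def by (simp add: map_bind_pmf)
  finally show ?thesis .
qed

definition view :: "nat \<Rightarrow> (nat \<Rightarrow> bool) \<Rightarrow> (nat \<Rightarrow> bool list) \<Rightarrow> nat \<Rightarrow> bool list option" where
  "view n B x = (\<lambda>i. if i < n \<and> \<not> B i then Some (x i) else None)"

lemma pair_pmf_of_set:
  assumes "finite A" "A \<noteq> {}" "finite B" "B \<noteq> {}"
  shows "pair_pmf (pmf_of_set A) (pmf_of_set B) = pmf_of_set (A \<times> B)"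
  by (rule pmf_eqI) (auto simp: pmf_pair assms card_cartesian_product indicator_def)

lemma exists_le_expectation:
  fixes f :: "'a \<Rightarrow> real"
  assumes "\<And>x. \<bar>f x\<bar> \<le> K"
  shows "\<exists>x\<in>set_pmf p. f x \<le> measure_pmf.expectation p f"
proof (rule ccontr)
  assume "\<not> ?thesis"
  hence gt: "\<And>x. x \<in> set_pmf p \<Longrightarrow> measure_pmf.expectation p f < f x" by force
  have int: "integrable (measure_pmf p) f"
    by (rule measure_pmf.integrable_const_bound[where B=K]) (use assms in auto)
  have "measure_pmf.expectation p (\<lambda>_. measure_pmf.expectation p f) < measure_pmf.expectation p f"
    by (rule measure_pmf.integral_less_AE_space) (use int gt in \<open>auto intro!: AE_pmfI\<close>)
  thus False by simp
qed

lemma bool_lists_card: "card {b :: bool list. length b = F} = 2 ^ F" "finite {b :: bool list. length b = F}"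
proof -
  have e: "{b :: bool list. length b = F} = {xs. set xs \<subseteq> UNIV \<and> length xs = F}" by auto
  show "card {b :: bool list. length b = F} = 2 ^ F"
    unfolding e by (subst card_lists_length_eq) (auto simp: card_UNIV_bool)
  show "finite {b :: bool list. length b = F}"
    unfolding e by (rule finite_lists_length_eq) auto
qed

lemma count_success:
  fixes x :: "nat \<Rightarrow> nat \<Rightarrow> nat \<Rightarrow> bool list" and aux :: "nat \<Rightarrow> nat \<Rightarrow> 'a"
  assumes len: "\<And>w1 w2 i. length (x w1 w2 i) = F"
    and aux: "\<And>w1 w2. w1 \<in> {1..L} \<Longrightarrow> w2 \<in> {1..L} \<Longrightarrow> aux w1 w2 \<in> A" and finA: "finite A"
  shows "card ({1..L} \<times> {1..L} \<inter> {(w1,w2). D (view n B (x w1 w2)) (aux w1 w2) = (w1,w2)})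
           \<le> 2 ^ (F * card {i. i < n \<and> \<not> B i}) * card A"
proof -
  define S where "S = {i. i < n \<and> \<not> B i}"
  have finS: "finite S" unfolding S_def by auto
  define sl where "sl = sorted_list_of_set S"
  have sl: "set sl = S" "length sl = card S" using finS unfolding sl_def by auto
  define Bl where "Bl = {b :: bool list. length b = F}"
  define Vs where "Vs = {xs. set xs \<subseteq> Bl \<and> length xs = card S}"
  define G where "G = ({1..L} \<times> {1..L} \<inter> {(w1,w2). D (view n B (x w1 w2)) (aux w1 w2) = (w1,w2)})"
  define h where "h = (\<lambda>(w1,w2). (map (x w1 w2) sl, aux w1 w2))"
  have inj: "inj_on h G"
  proof (rule inj_onI)
    fix u v assume u: "u \<in> G" and v: "v \<in> G" and huv: "h u = h v"
    obtain u1 u2 where uu: "u = (u1,u2)" by force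
    obtain v1 v2 where vv: "v = (v1,v2)" by force
    have m: "map (x u1 u2) sl = map (x v1 v2) sl" and a: "aux u1 u2 = aux v1 v2"
      using huv uu vv h_def by auto
    have "view n B (x u1 u2) = view n B (x v1 v2)"
    proof
      fix i show "view n B (x u1 u2) i = view n B (x v1 v2) i"
      proof (cases "i < n \<and> \<not> B i")
        case True
        hence "i \<in> set sl" using sl S_def by auto
        with m have "x u1 u2 i = x v1 v2 i" by (simp add: map_eq_conv)
        thus ?thesis by (simp add: view_def)
      next
        case False thus ?thesis unfolding view_def by (simp only: if_not_P if_False)
      qed
    qed
    hence "D (view n B (x u1 u2)) (aux u1 u2) = D (view n B (x v1 v2)) (aux v1 v2)" using a by simp
    moreover have "D (view n B (x u1 u2)) (aux u1 u2) = (u1,u2)" using u uu unfolding G_def by blast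
    moreover have "D (view n B (x v1 v2)) (aux v1 v2) = (v1,v2)" using v vv unfolding G_def by blast
    ultimately show "u = v" using uu vv by simp
  qed
  have img: "h ` G \<subseteq> Vs \<times> A"
    using aux len sl unfolding h_def G_def Vs_def Bl_def by auto
  have finBl: "finite Bl" "card Bl = 2 ^ F" using bool_lists_card Bl_def by auto
  have "card G = card (h ` G)" using inj by (simp add: card_image)
  also have "\<dots> \<le> card (Vs \<times> A)"
    by (rule card_mono[OF _ img]) (use finBl finA in \<open>auto simp: Vs_def intro!: finite_lists_length_eq\<close>)
  also have "\<dots> = (2 ^ F) ^ card S * card A"
    unfolding Vs_def card_cartesian_product using finBl by (simp add: card_lists_length_eq)
  finally show ?thesis unfolding G_def S_def by (simp add: power_mult)
qed

lemma set_pmf_uniform: "L \<ge> 1 \<Longrightarrow> set_pmf (pmf_of_set {1..L::nat}) = {1..L}"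
  by (subst set_pmf_of_set) auto

lemma prob_srcb:
  assumes "L \<ge> 1"
  shows "measure_pmf.prob (srcb n L \<delta>) {(w1,w2,B). P w1 w2 B}
       = measure_pmf.expectation (Pb n \<delta>) (\<lambda>B. card ({1..L} \<times> {1..L} \<inter> {(w1,w2). P w1 w2 B}) / (real L)^2)"
proof -
  have "measure_pmf.prob (srcb n L \<delta>) {(w1,w2,B). P w1 w2 B}
     = measure_pmf.expectation (Pb n \<delta>) (\<lambda>B. measure_pmf.prob (pmf_of_set ({1..L} \<times> {1..L})) {(w1,w2). P w1 w2 B})"
    unfolding srcb_def prob_bind_pmf using assms
    by (simp add: pair_pmf_of_set case_prod_unfold vimage_def)
  also have "\<dots> = measure_pmf.expectation (Pb n \<delta>) (\<lambda>B. card ({1..L} \<times> {1..L} \<inter> {(w1,w2). P w1 w2 B}) / (real L)^2)"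
    using assms by (subst measure_pmf_of_set) (auto simp: card_cartesian_product power2_eq_square)
  finally show ?thesis .
qed

lemma map_Pb_binomial:
  assumes "0 \<le> \<delta>" "\<delta> \<le> 1"
  shows "map_pmf (\<lambda>B. card {i. i < n \<and> \<not> B i}) (Pb n \<delta>) = binomial_pmf n (1 - \<delta>)"
proof -
  have nb: "map_pmf Not (bernoulli_pmf \<delta>) = bernoulli_pmf (1 - \<delta>)"
  proof (rule bool_pmf_eq_bernoulli)
    have "Not -` {True} = {False}" by auto
    thus "measure_pmf.prob (map_pmf Not (bernoulli_pmf \<delta>)) {True} = 1 - \<delta>"
      using assms by (simp add: measure_pmf_single pmf_map)
  qed
  have "Pi_pmf {..<n} True (\<lambda>_. bernoulli_pmf (1 - \<delta>)) = map_pmf (\<lambda>h. Not \<circ> h) (Pb n \<delta>)"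
    unfolding Pb_def nb[symmetric] by (subst Pi_pmf_map) auto
  moreover have "binomial_pmf n (1 - \<delta>) = map_pmf (\<lambda>f. card {x\<in>{..<n}. f x}) (Pi_pmf {..<n} True (\<lambda>_. bernoulli_pmf (1 - \<delta>)))"
    by (rule binomial_pmf_altdef') (use assms in auto)
  ultimately show ?thesis by (simp add: pmf.map_comp o_def)
qed

lemma expectation_Pb_binomial:
  fixes g :: "nat \<Rightarrow> real"
  assumes "0 \<le> \<delta>" "\<delta> \<le> 1"
  shows "measure_pmf.expectation (Pb n \<delta>) (\<lambda>B. g (card {i. i < n \<and> \<not> B i}))
       = measure_pmf.expectation (binomial_pmf n (1 - \<delta>)) g"
  by (subst map_Pb_binomial[OF assms, symmetric]) (rule integral_map_pmf[symmetric])

lemma tail_split: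
  fixes f :: "'a \<Rightarrow> real"
  assumes "\<And>x. \<bar>f x\<bar> \<le> K" "\<And>x. f x \<le> 1" "\<And>x. \<not> P x \<Longrightarrow> f x \<le> c" "c \<ge> 0"
  shows "measure_pmf.expectation p f \<le> measure_pmf.prob p {x. P x} + c"
proof -
  have "measure_pmf.expectation p f \<le> measure_pmf.expectation p (\<lambda>x. indicator {x. P x} x + c)"
  proof (rule integral_mono)
    show "integrable (measure_pmf p) f"
      by (rule measure_pmf.integrable_const_bound[where B=K]) (use assms in auto)
    show "integrable (measure_pmf p) (\<lambda>x. indicator {x. P x} x + c)"
      by (rule measure_pmf.integrable_const_bound[where B="1+c"]) (use assms in \<open>auto simp: indicator_def\<close>)
    fix x show "f x \<le> indicator {x. P x} x + c"
      using assms(2)[of x] assms(3)[of x] assms(4) by (cases "P x") auto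
  qed
  also have "\<dots> = measure_pmf.prob p {x. P x} + c"
    by (subst Bochner_Integration.integral_add) (auto simp: measure_pmf.emeasure_eq_measure)
  finally show ?thesis .
qed

lemma conv_bound:
  fixes x :: "nat \<Rightarrow> nat \<Rightarrow> nat \<Rightarrow> bool list" and aux :: "nat \<Rightarrow> nat \<Rightarrow> 'a" and t :: real
  assumes L: "L \<ge> 1" and d: "0 \<le> \<delta>" "\<delta> \<le> 1"
    and len: "\<And>w1 w2 i. length (x w1 w2 i) = F"
    and aux: "\<And>w1 w2. w1 \<in> {1..L} \<Longrightarrow> w2 \<in> {1..L} \<Longrightarrow> aux w1 w2 \<in> A" and finA: "finite A"
  shows "measure_pmf.prob (srcb n L \<delta>) {(w1,w2,B). D (view n B (x w1 w2)) (aux w1 w2) = (w1,w2)}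
     \<le> measure_pmf.prob (binomial_pmf n (1 - \<delta>)) {k. t \<le> real k} + 2 powr (real F * t) * card A / (real L)^2"
proof -
  define G where "G = (\<lambda>k::nat. min 1 (2 ^ (F * k) * card A / (real L)^2))"
  have Lp: "(real L)^2 > 0" using L by auto
  have pw: "\<And>B. card ({1..L} \<times> {1..L} \<inter> {(w1,w2). D (view n B (x w1 w2)) (aux w1 w2) = (w1,w2)}) / (real L)^2
            \<le> G (card {i. i < n \<and> \<not> B i})"
  proof -
    fix B
    let ?C = "card ({1..L} \<times> {1..L} \<inter> {(w1,w2). D (view n B (x w1 w2)) (aux w1 w2) = (w1,w2)})"
    have c1: "?C \<le> 2 ^ (F * card {i. i < n \<and> \<not> B i}) * card A"
      by (rule count_success[OF len aux finA])
    have c2: "?C \<le> L * L"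
      by (rule order.trans[OF card_mono[of "{1..L} \<times> {1..L}"]]) (auto simp: card_cartesian_product)
    have "real ?C \<le> 2 ^ (F * card {i. i < n \<and> \<not> B i}) * card A" using c1 by (simp flip: of_nat_mult of_nat_power)
    moreover have "real ?C \<le> (real L)^2" using c2 by (simp add: power2_eq_square flip: of_nat_mult)
    ultimately show "?C / (real L)^2 \<le> G (card {i. i < n \<and> \<not> B i})"
      unfolding G_def using Lp by (auto simp: divide_right_mono)
  qed
  have Gb: "\<And>k. \<bar>G k\<bar> \<le> 1" "\<And>k. G k \<le> 1"
    unfolding G_def using Lp by auto
  have "measure_pmf.prob (srcb n L \<delta>) {(w1,w2,B). D (view n B (x w1 w2)) (aux w1 w2) = (w1,w2)}
      = measure_pmf.expectation (Pb n \<delta>) (\<lambda>B. card ({1..L} \<times> {1..L} \<inter> {(w1,w2). D (view n B (x w1 w2)) (aux w1 w2) = (w1,w2)}) / (real L)^2)"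
    by (rule prob_srcb[OF L])
  also have "\<dots> \<le> measure_pmf.expectation (Pb n \<delta>) (\<lambda>B. G (card {i. i < n \<and> \<not> B i}))"
  proof (rule integral_mono[OF _ _ pw])
    show "integrable (measure_pmf (Pb n \<delta>)) (\<lambda>B. G (card {i. i < n \<and> \<not> B i}))"
      by (rule measure_pmf.integrable_const_bound[where B=1]) (use Gb in auto)
    show "integrable (measure_pmf (Pb n \<delta>)) (\<lambda>B. card ({1..L} \<times> {1..L} \<inter> {(w1,w2). D (view n B (x w1 w2)) (aux w1 w2) = (w1,w2)}) / (real L)^2)"
    proof (rule measure_pmf.integrable_const_bound[where B=1])
      show "AE B in measure_pmf (Pb n \<delta>). norm (card ({1..L} \<times> {1..L} \<inter> {(w1,w2). D (view n B (x w1 w2)) (aux w1 w2) = (w1,w2)}) / (real L)^2) \<le> 1"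
      proof (rule AE_I2)
        fix B
        have "card ({1..L} \<times> {1..L} \<inter> {(w1,w2). D (view n B (x w1 w2)) (aux w1 w2) = (w1,w2)}) / (real L)^2 \<le> 1"
          using pw[of B] Gb(2)[of "card {i. i < n \<and> \<not> B i}"] by linarith
        thus "norm (card ({1..L} \<times> {1..L} \<inter> {(w1,w2). D (view n B (x w1 w2)) (aux w1 w2) = (w1,w2)}) / (real L)^2) \<le> 1"
          by simp
      qed
    qed simp
  qed
  also have "\<dots> = measure_pmf.expectation (binomial_pmf n (1 - \<delta>)) G"
    by (rule expectation_Pb_binomial[OF d])
  also have "\<dots> \<le> measure_pmf.prob (binomial_pmf n (1 - \<delta>)) {k. t \<le> real k} + 2 powr (real F * t) * card A / (real L)^2"
  proof (rule tail_split[OF Gb])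
    fix k assume "\<not> t \<le> real k"
    hence "real F * real k \<le> real F * t" by (auto intro: mult_left_mono)
    hence "2 ^ (F * k) \<le> (2::real) powr (real F * t)"
      by (metis powr_realpow of_nat_mult powr_mono one_le_numeral zero_less_numeral)
    hence "2 ^ (F * k) * real (card A) \<le> 2 powr (real F * t) * real (card A)"
      by (rule mult_right_mono) simp
    hence "2 ^ (F * k) * card A / (real L)^2 \<le> 2 powr (real F * t) * card A / (real L)^2"
      using Lp by (intro divide_right_mono) simp_all
    thus "G k \<le> 2 powr (real F * t) * card A / (real L)^2" unfolding G_def by linarith
  qed (use Lp in auto)
  finally show ?thesis .
qed

definition Vc :: "nat \<Rightarrow> nat \<Rightarrow> (nat \<Rightarrow> bool list) pmf" where
  "Vc n F = Pi_pmf {..<n} (replicate F False) (\<lambda>_. pmf_of_set {b. length b = F})"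

definition CBk :: "nat \<Rightarrow> nat \<Rightarrow> nat \<Rightarrow> (nat \<Rightarrow> nat \<Rightarrow> bool list) pmf" where
  "CBk T n F = Pi_pmf {..<T} (\<lambda>_. replicate F False) (\<lambda>_. Vc n F)"

definition agree :: "nat \<Rightarrow> (nat \<Rightarrow> bool) \<Rightarrow> (nat \<Rightarrow> bool list) \<Rightarrow> (nat \<Rightarrow> bool list) \<Rightarrow> bool" where
  "agree n B c c' \<longleftrightarrow> (\<forall>i<n. \<not> B i \<longrightarrow> c i = c' i)"

lemma Bl_ne: "{b :: bool list. length b = F} \<noteq> {}"
  by (auto intro: exI[of _ "replicate F False"])

lemma set_Vc: assumes "c \<in> set_pmf (Vc n F)" shows "length (c i) = F"
proof -
  have "\<forall>x. (x < n \<longrightarrow> c x \<in> {b. length b = F}) \<and> (\<not> x < n \<longrightarrow> c x = replicate F False)"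
    using assms unfolding Vc_def using bool_lists_card(2)[of F] Bl_ne[of F]
    by (simp add: set_Pi_pmf PiE_dflt_def)
  thus ?thesis by (cases "i < n") auto
qed

lemma set_CBk: "C \<in> set_pmf (CBk T n F) \<Longrightarrow> length (C m i) = F"
proof -
  assume "C \<in> set_pmf (CBk T n F)"
  hence "\<forall>x. (x < T \<longrightarrow> C x \<in> set_pmf (Vc n F)) \<and> (\<not> x < T \<longrightarrow> C x = (\<lambda>_. replicate F False))"
    unfolding CBk_def by (simp add: set_Pi_pmf PiE_dflt_def)
  thus ?thesis by (cases "m < T") (auto simp: set_Vc)
qed

lemma prob_Vc_agree:
  assumes "\<And>i. i < n \<Longrightarrow> \<not> B i \<Longrightarrow> length (b i) = F"
  shows "measure_pmf.prob (Vc n F) {y. agree n B y b} = (1 / 2 ^ F) ^ card {i. i < n \<and> \<not> B i}"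
proof -
  let ?Bs = "\<lambda>i. if \<not> B i then {b i} else UNIV"
  have e: "{y. agree n B y b} = Pi {..<n} ?Bs" unfolding agree_def Pi_def by auto
  have p: "\<And>i. i < n \<Longrightarrow> measure_pmf.prob (pmf_of_set {c :: bool list. length c = F}) (?Bs i)
             = (if \<not> B i then 1 / 2 ^ F else 1)"
    using assms bool_lists_card[of F] Bl_ne[of F]
    by (auto simp: measure_pmf_of_set)
  have "measure_pmf.prob (Vc n F) {y. agree n B y b}
     = (\<Prod>i\<in>{..<n}. measure_pmf.prob (pmf_of_set {c :: bool list. length c = F}) (?Bs i))"
    unfolding e Vc_def by (rule measure_Pi_pmf_Pi) simp
  also have "\<dots> = (\<Prod>i\<in>{..<n}. (if \<not> B i then 1 / 2 ^ F else 1))"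
    by (rule prod.cong) (auto simp: p)
  also have "\<dots> = (1 / 2 ^ F) ^ card ({..<n} \<inter> {i. \<not> B i})"
    by (subst prod.If_cases) auto
  also have "{..<n} \<inter> {i. \<not> B i} = {i. i < n \<and> \<not> B i}" by auto
  finally show ?thesis .
qed

lemma prob_pair_swap:
  "measure_pmf.prob (pair_pmf V R) {(y,f). P y f} = measure_pmf.expectation R (\<lambda>f. measure_pmf.prob V {y. P y f})"
proof -
  have "pair_pmf V R = R \<bind> (\<lambda>f. map_pmf (\<lambda>y. (y,f)) V)"
    unfolding pair_pmf_def map_pmf_def by (rule bind_commute_pmf)
  thus ?thesis by (simp add: prob_bind_pmf vimage_def)
qed

lemma prob_CBk_agree:
  assumes "m < T" "m' < T" "m \<noteq> m'"
  shows "measure_pmf.prob (CBk T n F) {C. agree n B (C m') (C m)} = (1 / 2 ^ F) ^ card {i. i < n \<and> \<not> B i}"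
proof -
  define R where "R = Pi_pmf ({..<T} - {m'}) (\<lambda>_. replicate F False) (\<lambda>_. Vc n F)"
  have ins: "{..<T} = insert m' ({..<T} - {m'})" using assms by auto
  have cb: "CBk T n F = map_pmf (\<lambda>(y,f). f(m':=y)) (pair_pmf (Vc n F) R)"
    unfolding CBk_def R_def by (subst ins, subst Pi_pmf_insert) auto
  have "measure_pmf.prob (CBk T n F) {C. agree n B (C m') (C m)}
      = measure_pmf.prob (pair_pmf (Vc n F) R) {(y,f). agree n B y (f m)}"
    unfolding cb using assms by (simp add: vimage_def case_prod_unfold)
  also have "\<dots> = measure_pmf.expectation R (\<lambda>f. measure_pmf.prob (Vc n F) {y. agree n B y (f m)})"
    by (rule prob_pair_swap)
  also have "\<dots> = measure_pmf.expectation R (\<lambda>f. (1 / 2 ^ F) ^ card {i. i < n \<and> \<not> B i})"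
  proof (rule integral_cong_AE)
    show "AE f in measure_pmf R. measure_pmf.prob (Vc n F) {y. agree n B y (f m)} = (1 / 2 ^ F) ^ card {i. i < n \<and> \<not> B i}"
    proof (rule AE_pmfI)
      fix f assume "f \<in> set_pmf R"
      hence "f m \<in> set_pmf (Vc n F)" using assms unfolding R_def by (auto simp: set_Pi_pmf PiE_dflt_def)
      thus "measure_pmf.prob (Vc n F) {y. agree n B y (f m)} = (1 / 2 ^ F) ^ card {i. i < n \<and> \<not> B i}"
        by (intro prob_Vc_agree set_Vc)
    qed
  qed auto
  also have "\<dots> = (1 / 2 ^ F) ^ card {i. i < n \<and> \<not> B i}" by simp
  finally show ?thesis .
qed

lemma prob_CBk_bad:
  assumes "m < T"
  shows "measure_pmf.prob (CBk T n F) {C. \<exists>m'<T. m' \<noteq> m \<and> agree n B (C m') (C m)}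
     \<le> min 1 (real T * (1 / 2 ^ F) ^ card {i. i < n \<and> \<not> B i})"
proof -
  have e: "{C. \<exists>m'<T. m' \<noteq> m \<and> agree n B (C m') (C m)} = (\<Union>m'\<in>{..<T} - {m}. {C. agree n B (C m') (C m)})"
    by auto
  have "measure_pmf.prob (CBk T n F) {C. \<exists>m'<T. m' \<noteq> m \<and> agree n B (C m') (C m)}
     \<le> (\<Sum>m'\<in>{..<T} - {m}. measure_pmf.prob (CBk T n F) {C. agree n B (C m') (C m)})"
    unfolding e by (rule measure_pmf.finite_measure_subadditive_finite) auto
  also have "\<dots> = (\<Sum>m'\<in>{..<T} - {m}. (1 / 2 ^ F) ^ card {i. i < n \<and> \<not> B i})"
    by (rule sum.cong) (use assms in \<open>auto intro!: prob_CBk_agree\<close>)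
  also have "\<dots> \<le> real T * (1 / 2 ^ F) ^ card {i. i < n \<and> \<not> B i}"
    using assms by (simp add: card_Diff_singleton)
  finally show ?thesis by simp
qed

lemma map_srcb_B: "map_pmf (\<lambda>(w1,w2,B). B) (srcb n L \<delta>) = Pb n \<delta>"
  unfolding srcb_def by (simp add: map_bind_pmf pmf.map_comp o_def case_prod_unfold bind_return_pmf')

lemma set_srcb: "L \<ge> 1 \<Longrightarrow> (w1,w2,B) \<in> set_pmf (srcb n L \<delta>) \<Longrightarrow> w1 \<in> {1..L} \<and> w2 \<in> {1..L}"
  unfolding srcb_def by (auto simp: set_pmf_uniform)

lemma ach_bound:
  fixes t :: real and mm :: "nat \<Rightarrow> nat \<Rightarrow> nat"
  assumes T: "T \<ge> 1" and L: "L \<ge> 1" and d: "0 \<le> \<delta>" "\<delta> \<le> 1"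
    and mm: "\<And>w1 w2. w1 \<in> {1..L} \<Longrightarrow> w2 \<in> {1..L} \<Longrightarrow> mm w1 w2 < T"
  shows "\<exists>C. (\<forall>m i. length (C m i) = F) \<and>
     measure_pmf.prob (srcb n L \<delta>) {(w1,w2,B). (w1,w2) \<notin> {1..L} \<times> {1..L} \<or> (\<exists>m'<T. m' \<noteq> mm w1 w2 \<and> agree n B (C m') (C (mm w1 w2)))}
       \<le> measure_pmf.prob (binomial_pmf n (1 - \<delta>)) {k. real k \<le> t} + real T * 2 powr (- (real F * t))"
proof -
  define Bd where "Bd = {(C, (w1,w2,B)). (w1,w2) \<notin> {1..L} \<times> {1..L} \<or> (\<exists>m'<T. m' \<noteq> mm w1 w2 \<and> agree n B (C m') (C (mm w1 w2)))}"
  define J where "J = CBk T n F \<bind> (\<lambda>C. map_pmf (\<lambda>s. (C,s)) (srcb n L \<delta>))"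
  define G where "G = (\<lambda>k::nat. min 1 (real T * (1 / 2 ^ F) ^ k))"
  have Gb: "\<And>k. \<bar>G k\<bar> \<le> 1" "\<And>k. G k \<le> 1" unfolding G_def by auto
  have J1: "measure_pmf.prob J Bd = measure_pmf.expectation (CBk T n F)
        (\<lambda>C. measure_pmf.prob (srcb n L \<delta>) {(w1,w2,B). (w1,w2) \<notin> {1..L} \<times> {1..L} \<or> (\<exists>m'<T. m' \<noteq> mm w1 w2 \<and> agree n B (C m') (C (mm w1 w2)))})"
    unfolding J_def prob_bind_pmf Bd_def by (simp add: vimage_def case_prod_unfold)
  have J2: "J = srcb n L \<delta> \<bind> (\<lambda>s. map_pmf (\<lambda>C. (C,s)) (CBk T n F))"
    unfolding J_def map_pmf_def by (rule bind_commute_pmf)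
  have "measure_pmf.prob J Bd = measure_pmf.expectation (srcb n L \<delta>) (\<lambda>s. measure_pmf.prob (CBk T n F) {C. (C,s) \<in> Bd})"
    unfolding J2 prob_bind_pmf by (simp add: vimage_def)
  also have "\<dots> \<le> measure_pmf.expectation (srcb n L \<delta>) (\<lambda>(w1,w2,B). G (card {i. i < n \<and> \<not> B i}))"
  proof (rule integral_mono_AE)
    show "integrable (measure_pmf (srcb n L \<delta>)) (\<lambda>s. measure_pmf.prob (CBk T n F) {C. (C,s) \<in> Bd})"
      by (rule measure_pmf.integrable_const_bound[where B=1]) auto
    show "integrable (measure_pmf (srcb n L \<delta>)) (\<lambda>(w1,w2,B). G (card {i. i < n \<and> \<not> B i}))"
      by (rule measure_pmf.integrable_const_bound[where B=1]) (use Gb in \<open>auto simp: case_prod_unfold\<close>)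
    show "AE s in measure_pmf (srcb n L \<delta>). measure_pmf.prob (CBk T n F) {C. (C,s) \<in> Bd} \<le> (\<lambda>(w1,w2,B). G (card {i. i < n \<and> \<not> B i})) s"
    proof (rule AE_pmfI)
      fix s assume s: "s \<in> set_pmf (srcb n L \<delta>)"
      obtain w1 w2 B where sv: "s = (w1,w2,B)" by (cases s) auto
      have w12: "w1 \<in> {1..L} \<and> w2 \<in> {1..L}" using set_srcb[OF L] s sv by blast
      hence "mm w1 w2 < T" using mm by blast
      hence "measure_pmf.prob (CBk T n F) {C. \<exists>m'<T. m' \<noteq> mm w1 w2 \<and> agree n B (C m') (C (mm w1 w2))}
          \<le> G (card {i. i < n \<and> \<not> B i})" unfolding G_def by (rule prob_CBk_bad)
      thus "measure_pmf.prob (CBk T n F) {C. (C,s) \<in> Bd} \<le> (\<lambda>(w1,w2,B). G (card {i. i < n \<and> \<not> B i})) s"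
        unfolding sv Bd_def using w12 by simp
    qed
  qed
  also have "\<dots> = measure_pmf.expectation (Pb n \<delta>) (\<lambda>B. G (card {i. i < n \<and> \<not> B i}))"
    by (subst map_srcb_B[symmetric, where n=n and L=L and \<delta>=\<delta>]) (simp add: case_prod_unfold)
  also have "\<dots> = measure_pmf.expectation (binomial_pmf n (1 - \<delta>)) G"
    by (rule expectation_Pb_binomial[OF d])
  also have "\<dots> \<le> measure_pmf.prob (binomial_pmf n (1 - \<delta>)) {k. real k \<le> t} + real T * 2 powr (- (real F * t))"
  proof (rule tail_split[OF Gb])
    fix k assume "\<not> real k \<le> t"
    hence "- (real F * real k) \<le> - (real F * t)" by (auto intro: mult_left_mono)
    hence "2 powr (- (real F * real k)) \<le> (2::real) powr (- (real F * t))"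
      by (rule powr_mono) auto
    moreover have "(1 / 2 ^ F) ^ k = (2::real) powr (- (real F * real k))"
    proof -
      have "(1 / 2 ^ F) ^ k = inverse ((2::real) ^ (F * k))"
        by (simp add: power_mult power_one_over inverse_eq_divide)
      also have "(2::real) ^ (F * k) = 2 powr (real F * real k)"
        by (simp add: powr_realpow flip: of_nat_mult)
      finally show ?thesis by (simp add: powr_minus)
    qed
    ultimately have "real T * (1 / 2 ^ F) ^ k \<le> real T * 2 powr (- (real F * t))"
      by (intro mult_left_mono) auto
    thus "G k \<le> real T * 2 powr (- (real F * t))" unfolding G_def by linarith
  qed auto
  finally have bnd: "measure_pmf.prob J Bd \<le> measure_pmf.prob (binomial_pmf n (1 - \<delta>)) {k. real k \<le> t} + real T * 2 powr (- (real F * t))" .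
  obtain C where C: "C \<in> set_pmf (CBk T n F)"
     and Cle: "measure_pmf.prob (srcb n L \<delta>) {(w1,w2,B). (w1,w2) \<notin> {1..L} \<times> {1..L} \<or> (\<exists>m'<T. m' \<noteq> mm w1 w2 \<and> agree n B (C m') (C (mm w1 w2)))}
        \<le> measure_pmf.expectation (CBk T n F)
        (\<lambda>C. measure_pmf.prob (srcb n L \<delta>) {(w1,w2,B). (w1,w2) \<notin> {1..L} \<times> {1..L} \<or> (\<exists>m'<T. m' \<noteq> mm w1 w2 \<and> agree n B (C m') (C (mm w1 w2)))})"
    using exists_le_expectation[of "\<lambda>C. measure_pmf.prob (srcb n L \<delta>) {(w1,w2,B). (w1,w2) \<notin> {1..L} \<times> {1..L} \<or> (\<exists>m'<T. m' \<noteq> mm w1 w2 \<and> agree n B (C m') (C (mm w1 w2)))}" 1 "CBk T n F"]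
    by auto
  show ?thesis
    using C Cle J1 bnd set_CBk[OF C] by (intro exI[of _ C]) auto
qed

lemma marg_bernoulli:
  assumes "measure_pmf.prob q {e. \<phi> e} = \<delta>"
  shows "map_pmf \<phi> q = bernoulli_pmf \<delta>"
proof (rule bool_pmf_eq_bernoulli)
  have "\<phi> -` {True} = {e. \<phi> e}" by auto
  thus "measure_pmf.prob (map_pmf \<phi> q) {True} = \<delta>" using assms by simp
qed

lemma prob_src_reduce:
  assumes "\<phi> (False, False) = False" "measure_pmf.prob q {e. \<phi> e} = \<delta>"
  shows "measure_pmf.prob (src_pmf n L q) {(w1,w2,E). P w1 w2 (\<lambda>i. \<phi> (E i))}
       = measure_pmf.prob (srcb n L \<delta>) {(w1,w2,B). P w1 w2 B}"
proof -
  have "measure_pmf.prob (srcb n L \<delta>) {(w1,w2,B). P w1 w2 B}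
     = measure_pmf.prob (map_pmf (\<lambda>(w1,w2,E). (w1,w2,\<phi> \<circ> E)) (src_pmf n L q)) {(w1,w2,B). P w1 w2 B}"
    using src_reduce[OF assms(1) marg_bernoulli[OF assms(2)]] by simp
  also have "\<dots> = measure_pmf.prob (src_pmf n L q) {(w1,w2,E). P w1 w2 (\<lambda>i. \<phi> (E i))}"
    by (simp add: vimage_def case_prod_unfold o_def)
  finally show ?thesis ..
qed

lemma err_set_eq:
  "{(w1, w2, E).
          let x = f d w1 w2;
              Y1 = (\<lambda>i. if i < n \<and> \<not> fst (E i) then Some (x i) else None);
              Y2 = (\<lambda>i. if i < n \<and> \<not> snd (E i) then Some (x i) else None)
          in dec1 d Y1 (g w1 w2) \<noteq> sel (fst d) w1 w2 \<or> dec2 d Y2 \<noteq> sel (snd d) w1 w2}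
   = {(w1,w2,E). dec1 d (view n (\<lambda>i. fst (E i)) (f d w1 w2)) (g w1 w2) \<noteq> sel (fst d) w1 w2}
     \<union> {(w1,w2,E). dec2 d (view n (\<lambda>i. snd (E i)) (f d w1 w2)) \<noteq> sel (snd d) w1 w2}"
  by (auto simp: view_def Let_def)

lemma err_prob_parts:
  assumes "measure_pmf.prob q {e. fst e} = \<delta>" "measure_pmf.prob q {e. snd e} = \<delta>"
  shows "err_prob n L q f g dec1 dec2 d \<le>
      measure_pmf.prob (srcb n L \<delta>) {(w1,w2,B). dec1 d (view n B (f d w1 w2)) (g w1 w2) \<noteq> sel (fst d) w1 w2}
    + measure_pmf.prob (srcb n L \<delta>) {(w1,w2,B). dec2 d (view n B (f d w1 w2)) \<noteq> sel (snd d) w1 w2}"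
    and "measure_pmf.prob (srcb n L \<delta>) {(w1,w2,B). dec1 d (view n B (f d w1 w2)) (g w1 w2) \<noteq> sel (fst d) w1 w2}
         \<le> err_prob n L q f g dec1 dec2 d"
    and "measure_pmf.prob (srcb n L \<delta>) {(w1,w2,B). dec2 d (view n B (f d w1 w2)) \<noteq> sel (snd d) w1 w2}
         \<le> err_prob n L q f g dec1 dec2 d"
proof -
  have r1: "measure_pmf.prob (srcb n L \<delta>) {(w1,w2,B). dec1 d (view n B (f d w1 w2)) (g w1 w2) \<noteq> sel (fst d) w1 w2}
     = measure_pmf.prob (src_pmf n L q) {(w1,w2,E). dec1 d (view n (\<lambda>i. fst (E i)) (f d w1 w2)) (g w1 w2) \<noteq> sel (fst d) w1 w2}"
    by (rule prob_src_reduce[symmetric]) (use assms in auto)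
  have r2: "measure_pmf.prob (srcb n L \<delta>) {(w1,w2,B). dec2 d (view n B (f d w1 w2)) \<noteq> sel (snd d) w1 w2}
     = measure_pmf.prob (src_pmf n L q) {(w1,w2,E). dec2 d (view n (\<lambda>i. snd (E i)) (f d w1 w2)) \<noteq> sel (snd d) w1 w2}"
    by (rule prob_src_reduce[symmetric]) (use assms in auto)
  show "err_prob n L q f g dec1 dec2 d \<le>
      measure_pmf.prob (srcb n L \<delta>) {(w1,w2,B). dec1 d (view n B (f d w1 w2)) (g w1 w2) \<noteq> sel (fst d) w1 w2}
    + measure_pmf.prob (srcb n L \<delta>) {(w1,w2,B). dec2 d (view n B (f d w1 w2)) \<noteq> sel (snd d) w1 w2}"
    unfolding r1 r2 err_prob_def err_set_eq by (rule measure_Un_le) auto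
  show "measure_pmf.prob (srcb n L \<delta>) {(w1,w2,B). dec1 d (view n B (f d w1 w2)) (g w1 w2) \<noteq> sel (fst d) w1 w2}
         \<le> err_prob n L q f g dec1 dec2 d"
    unfolding r1 err_prob_def err_set_eq by (rule measure_pmf.finite_measure_mono) auto
  show "measure_pmf.prob (srcb n L \<delta>) {(w1,w2,B). dec2 d (view n B (f d w1 w2)) \<noteq> sel (snd d) w1 w2}
         \<le> err_prob n L q f g dec1 dec2 d"
    unfolding r2 err_prob_def err_set_eq by (rule measure_pmf.finite_measure_mono) auto
qed




definition decm :: "(nat \<Rightarrow> nat \<Rightarrow> bool list) \<Rightarrow> nat \<Rightarrow> (nat \<Rightarrow> bool list option) \<Rightarrow> nat" where
  "decm C T Y = (SOME m. m < T \<and> (\<forall>i. Y i \<noteq> None \<longrightarrow> Y i = Some (C m i)))"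

lemma decm_correct:
  assumes "m < T" "\<not> (\<exists>m'<T. m' \<noteq> m \<and> agree n B (C m') (C m))"
  shows "decm C T (view n B (C m)) = m"
proof -
  let ?P = "\<lambda>m''. m'' < T \<and> (\<forall>i. view n B (C m) i \<noteq> None \<longrightarrow> view n B (C m) i = Some (C m'' i))"
  have "?P m" using assms(1) by (simp add: view_def)
  hence P: "?P (decm C T (view n B (C m)))" unfolding decm_def by (rule someI)
  have ag: "agree n B (C (decm C T (view n B (C m)))) (C m)"
    unfolding agree_def
  proof (intro allI impI)
    fix i assume "i < n" "\<not> B i"
    hence v: "view n B (C m) i = Some (C m i)" by (simp add: view_def)
    hence "view n B (C m) i = Some (C (decm C T (view n B (C m))) i)" using P by simp
    thus "C (decm C T (view n B (C m))) i = C m i" using v by simp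
  qed
  have lt: "decm C T (view n B (C m)) < T" using P by blast
  show ?thesis using assms(2) ag lt by blast
qed

lemma ach_demand:
  assumes q1: "measure_pmf.prob q {e. fst e} = \<delta>" and q2: "measure_pmf.prob q {e. snd e} = \<delta>"
    and hr1: "\<And>w1 w2. w1 \<in> {1..L} \<Longrightarrow> w2 \<in> {1..L} \<Longrightarrow> ra (mm w1 w2) (g w1 w2) = sel (fst d) w1 w2"
    and hr2: "\<And>w1 w2. w1 \<in> {1..L} \<Longrightarrow> w2 \<in> {1..L} \<Longrightarrow> rb (mm w1 w2) = sel (snd d) w1 w2"
    and mm: "\<And>w1 w2. w1 \<in> {1..L} \<Longrightarrow> w2 \<in> {1..L} \<Longrightarrow> mm w1 w2 < T"
    and fd: "f d = (\<lambda>w1 w2. C (mm w1 w2))"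
    and d1: "dec1 d = (\<lambda>Y v. ra (decm C T Y) v)" and d2: "dec2 d = (\<lambda>Y. rb (decm C T Y))"
    and bad: "measure_pmf.prob (srcb n L \<delta>) {(w1,w2,B). (w1,w2) \<notin> {1..L} \<times> {1..L} \<or> (\<exists>m'<T. m' \<noteq> mm w1 w2 \<and> agree n B (C m') (C (mm w1 w2)))} \<le> \<beta>"
  shows "err_prob n L q f g dec1 dec2 d \<le> 2 * \<beta>"
proof -
  let ?Bad = "{(w1,w2,B). (w1,w2) \<notin> {1..L} \<times> {1..L} \<or> (\<exists>m'<T. m' \<noteq> mm w1 w2 \<and> agree n B (C m') (C (mm w1 w2)))}"
  have s1: "{(w1,w2,B). dec1 d (view n B (f d w1 w2)) (g w1 w2) \<noteq> sel (fst d) w1 w2} \<subseteq> ?Bad"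
  proof (rule subsetI)
    fix x assume xin: "x \<in> {(w1,w2,B). dec1 d (view n B (f d w1 w2)) (g w1 w2) \<noteq> sel (fst d) w1 w2}"
    obtain w1 w2 B where x: "x = (w1,w2,B)" by (cases x) auto
    have ne: "dec1 d (view n B (f d w1 w2)) (g w1 w2) \<noteq> sel (fst d) w1 w2" using xin x by simp
    show "x \<in> ?Bad"
    proof (rule ccontr)
      assume "x \<notin> ?Bad"
      hence nb: "(w1,w2) \<in> {1..L} \<times> {1..L}" "\<not> (\<exists>m'<T. m' \<noteq> mm w1 w2 \<and> agree n B (C m') (C (mm w1 w2)))"
        using x by auto
      hence w: "w1 \<in> {1..L}" "w2 \<in> {1..L}" by auto
      have "decm C T (view n B (C (mm w1 w2))) = mm w1 w2"
        by (rule decm_correct[OF mm[OF w] nb(2)])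
      thus False using ne hr1[OF w] unfolding fd d1 by simp
    qed
  qed
  have s2: "{(w1,w2,B). dec2 d (view n B (f d w1 w2)) \<noteq> sel (snd d) w1 w2} \<subseteq> ?Bad"
  proof (rule subsetI)
    fix x assume xin: "x \<in> {(w1,w2,B). dec2 d (view n B (f d w1 w2)) \<noteq> sel (snd d) w1 w2}"
    obtain w1 w2 B where x: "x = (w1,w2,B)" by (cases x) auto
    have ne: "dec2 d (view n B (f d w1 w2)) \<noteq> sel (snd d) w1 w2" using xin x by simp
    show "x \<in> ?Bad"
    proof (rule ccontr)
      assume "x \<notin> ?Bad"
      hence nb: "(w1,w2) \<in> {1..L} \<times> {1..L}" "\<not> (\<exists>m'<T. m' \<noteq> mm w1 w2 \<and> agree n B (C m') (C (mm w1 w2)))"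
        using x by auto
      hence w: "w1 \<in> {1..L}" "w2 \<in> {1..L}" by auto
      have "decm C T (view n B (C (mm w1 w2))) = mm w1 w2"
        by (rule decm_correct[OF mm[OF w] nb(2)])
      thus False using ne hr2[OF w] unfolding fd d2 by simp
    qed
  qed
  have "err_prob n L q f g dec1 dec2 d \<le>
      measure_pmf.prob (srcb n L \<delta>) {(w1,w2,B). dec1 d (view n B (f d w1 w2)) (g w1 w2) \<noteq> sel (fst d) w1 w2}
    + measure_pmf.prob (srcb n L \<delta>) {(w1,w2,B). dec2 d (view n B (f d w1 w2)) \<noteq> sel (snd d) w1 w2}"
    by (rule err_prob_parts(1)[OF q1 q2])
  also have "\<dots> \<le> measure_pmf.prob (srcb n L \<delta>) ?Bad + measure_pmf.prob (srcb n L \<delta>) ?Bad"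
    by (intro add_mono measure_pmf.finite_measure_mono s1 s2) auto
  finally show ?thesis using bad by linarith
qed

lemma modfix:
  fixes a b Lc :: nat assumes "Lc > 0"
  shows "((a + b) mod Lc + Lc - b mod Lc) mod Lc = a mod Lc"
proof -
  define u where "u = a mod Lc"
  define w where "w = b mod Lc"
  have u: "u < Lc" and w: "w < Lc" using assms by (auto simp: u_def w_def)
  have e: "(a + b) mod Lc = (u + w) mod Lc" by (simp add: u_def w_def mod_add_eq)
  show ?thesis
  proof (cases "u + w < Lc")
    case True
    hence "(u + w) mod Lc = u + w" by simp
    hence "(a + b) mod Lc + Lc - b mod Lc = u + Lc" using e w_def by simp
    thus ?thesis using u by (simp add: u_def)
  next
    case False
    hence "(u + w) mod Lc = u + w - Lc" using u w by (simp add: mod_if le_mod_geq)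
    hence "(a + b) mod Lc + Lc - b mod Lc = u" using e w_def False by simp
    thus ?thesis using u by (simp add: u_def)
  qed
qed

lemma prob_bin_tail_ge:
  assumes "n > 0" "0 \<le> p" "p \<le> 1" "\<eta> \<ge> 0"
  shows "measure_pmf.prob (binomial_pmf n p) {k. real n * (p + \<eta>) \<le> real k} \<le> exp (- (2 * real n * \<eta>^2))"
proof -
  have "{k. real n * (p + \<eta>) \<le> real k} = {k. real k / real n \<ge> p + \<eta>}"
    using assms by (auto simp: field_simps)
  moreover have "measure_pmf.prob (binomial_pmf n p) {k. real k / real n \<ge> p + \<eta>} \<le> exp (- (2 * real n * \<eta>^2))"
    using binomial_distribution.prob_ge'[of p n \<eta>] assms by (auto simp: binomial_distribution_def)
  ultimately show ?thesis by simp
qed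

lemma prob_bin_tail_le:
  assumes "n > 0" "0 \<le> p" "p \<le> 1" "\<eta> \<ge> 0"
  shows "measure_pmf.prob (binomial_pmf n p) {k. real k \<le> real n * (p - \<eta>)} \<le> exp (- (2 * real n * \<eta>^2))"
proof -
  have "{k. real k \<le> real n * (p - \<eta>)} = {k. real k / real n \<le> p - \<eta>}"
    using assms by (auto simp: field_simps)
  moreover have "measure_pmf.prob (binomial_pmf n p) {k. real k / real n \<le> p - \<eta>} \<le> exp (- (2 * real n * \<eta>^2))"
    using binomial_distribution.prob_le'[of p n \<eta>] assms by (auto simp: binomial_distribution_def)
  ultimately show ?thesis by simp
qed

lemma msg_size_le: "real (msg_size n R) \<le> 2 powr (real n * R)"
  unfolding msg_size_def by simp

lemma msg_size_ge: "real (msg_size n R) \<ge> 2 powr (real n * R) - 1"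
proof -
  have z: "0 \<le> \<lfloor>2 powr (real n * R)\<rfloor>" by simp
  have "real (nat \<lfloor>2 powr (real n * R)\<rfloor>) = real_of_int \<lfloor>2 powr (real n * R)\<rfloor>"
    using z by simp
  moreover have "2 powr (real n * R) < real_of_int (\<lfloor>2 powr (real n * R)\<rfloor> + 1)"
    using floor_correct[of "2 powr (real n * R)"] by blast
  ultimately show ?thesis unfolding msg_size_def by simp
qed

lemma msg_size_pos: "R \<ge> 0 \<Longrightarrow> msg_size n R \<ge> 1"
proof -
  assume "R \<ge> 0"
  hence "1 \<le> 2 powr (real n * R)" by (intro ge_one_powr_ge_zero) auto
  hence "1 \<le> \<lfloor>2 powr (real n * R)\<rfloor>" by (simp add: le_floor_iff)
  thus ?thesis unfolding msg_size_def by linarith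
qed

lemma lim_pow: "0 < (b::real) \<Longrightarrow> b < 1 \<Longrightarrow> ((\<lambda>n::nat. b ^ n) \<longlongrightarrow> 0) at_top"
  by (intro LIMSEQ_power_zero) auto

lemma lim1: "\<eta> > 0 \<Longrightarrow> ((\<lambda>n::nat. exp (- (2 * real n * \<eta>^2))) \<longlongrightarrow> 0) at_top"
proof -
  assume "\<eta> > 0"
  have e: "\<And>n. exp (- (2 * real n * \<eta>^2)) = (exp (- (2 * \<eta>^2))) ^ n"
    by (simp add: exp_of_nat_mult[symmetric] algebra_simps)
  show ?thesis unfolding e by (rule lim_pow) (use \<open>\<eta> > 0\<close> in auto)
qed

lemma lim2: "a < 0 \<Longrightarrow> ((\<lambda>n::nat. 2 powr (real n * a)) \<longlongrightarrow> 0) at_top"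
proof -
  assume "a < 0"
  have e: "\<And>n. (2::real) powr (real n * a) = (2 powr a) ^ n"
    by (simp add: powr_realpow[symmetric] powr_powr mult.commute)
  show ?thesis unfolding e by (rule lim_pow) (use \<open>a < 0\<close> in \<open>auto simp: powr_less_one\<close>)
qed

lemma ev3: "a > 0 \<Longrightarrow> eventually (\<lambda>n::nat. 2 \<le> 2 powr (real n * a)) sequentially"
proof -
  assume a: "a > 0"
  show ?thesis unfolding eventually_sequentially
  proof (intro exI allI impI)
    fix n assume "nat \<lceil>1 / a\<rceil> \<le> n"
    hence "1 / a \<le> real n" by linarith
    hence "1 \<le> real n * a" using a by (simp add: field_simps)
    hence "(2::real) powr 1 \<le> 2 powr (real n * a)" by (intro powr_mono) auto
    thus "2 \<le> 2 powr (real n * a)" by simp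
  qed
qed

lemma conv_step:
  assumes q1: "measure_pmf.prob q {e. fst e} = \<delta>" and q2: "measure_pmf.prob q {e. snd e} = \<delta>"
    and d: "0 \<le> \<delta>" "\<delta> \<le> 1" and vc: "valid_code F n L Lc f g" and L: "L \<ge> 1" and n: "n > 0" and \<eta>: "\<eta> \<ge> 0"
    and e12: "err_prob n L q f g dec1 dec2 (1,2) < \<epsilon>" and e11: "err_prob n L q f g dec1 dec2 (1,1) < \<epsilon>"
  shows "1 - 2 * \<epsilon> \<le> exp (- (2 * real n * \<eta>^2)) + 2 powr (real F * (real n * ((1 - \<delta>) + \<eta>))) * real Lc / (real L)^2"
    and "1 - \<epsilon> \<le> exp (- (2 * real n * \<eta>^2)) + 2 powr (real F * (real n * ((1 - \<delta>) + \<eta>))) * real L / (real L)^2"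
proof -
  let ?t = "real n * ((1 - \<delta>) + \<eta>)"
  have len: "\<And>d w1 w2 i. length (f d w1 w2 i) = F" and gA: "\<And>w1 w2. w1 \<in> {1..L} \<Longrightarrow> w2 \<in> {1..L} \<Longrightarrow> g w1 w2 \<in> {1..Lc}"
    using vc unfolding valid_code_def by auto
  have tail: "measure_pmf.prob (binomial_pmf n (1 - \<delta>)) {k. ?t \<le> real k} \<le> exp (- (2 * real n * \<eta>^2))"
    by (rule prob_bin_tail_ge) (use n d \<eta> in auto)
  let ?S = "{(w1,w2,B). (\<lambda>Y v. (dec1 (1,2) Y v, dec2 (1,2) Y)) (view n B (f (1,2) w1 w2)) (g w1 w2) = (w1,w2)}"
  let ?E1 = "{(w1,w2,B). dec1 (1,2) (view n B (f (1,2) w1 w2)) (g w1 w2) \<noteq> sel (fst (1::nat,2::nat)) w1 w2}"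
  let ?E2 = "{(w1,w2,B). dec2 (1,2) (view n B (f (1,2) w1 w2)) \<noteq> sel (snd (1::nat,2::nat)) w1 w2}"
  have cb: "measure_pmf.prob (srcb n L \<delta>) ?S \<le> measure_pmf.prob (binomial_pmf n (1 - \<delta>)) {k. ?t \<le> real k}
        + 2 powr (real F * ?t) * card {1..Lc} / (real L)^2"
    by (rule conv_bound[OF L d len gA]) auto
  have "x \<in> ?S \<union> (?E1 \<union> ?E2)" for x
  proof -
    obtain w1 w2 B where x: "x = (w1,w2,B)" by (cases x) auto
    show ?thesis unfolding x by (simp add: sel_def)
  qed
  hence u: "?S \<union> (?E1 \<union> ?E2) = UNIV" by blast
  have "1 = measure_pmf.prob (srcb n L \<delta>) (?S \<union> (?E1 \<union> ?E2))"
    unfolding u by simp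
  also have "\<dots> \<le> measure_pmf.prob (srcb n L \<delta>) ?S + measure_pmf.prob (srcb n L \<delta>) (?E1 \<union> ?E2)"
    by (rule measure_Un_le) auto
  also have "measure_pmf.prob (srcb n L \<delta>) (?E1 \<union> ?E2) \<le> measure_pmf.prob (srcb n L \<delta>) ?E1 + measure_pmf.prob (srcb n L \<delta>) ?E2"
    by (rule measure_Un_le) auto
  finally have "1 \<le> measure_pmf.prob (srcb n L \<delta>) ?S + (measure_pmf.prob (srcb n L \<delta>) ?E1 + measure_pmf.prob (srcb n L \<delta>) ?E2)"
    by simp
  moreover have "measure_pmf.prob (srcb n L \<delta>) ?E1 \<le> err_prob n L q f g dec1 dec2 (1,2)"
    by (rule err_prob_parts(2)[OF q1 q2])
  moreover have "measure_pmf.prob (srcb n L \<delta>) ?E2 \<le> err_prob n L q f g dec1 dec2 (1,2)"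
    by (rule err_prob_parts(3)[OF q1 q2])
  ultimately show "1 - 2 * \<epsilon> \<le> exp (- (2 * real n * \<eta>^2)) + 2 powr (real F * ?t) * real Lc / (real L)^2"
    using cb tail e12 by simp
  let ?S' = "{(w1,w2,B). (\<lambda>Y a. (dec2 (1,1) Y, a)) (view n B (f (1,1) w1 w2)) ((\<lambda>w1 w2. w2) w1 w2) = (w1,w2)}"
  let ?E' = "{(w1,w2,B). dec2 (1,1) (view n B (f (1,1) w1 w2)) \<noteq> sel (snd (1::nat,1::nat)) w1 w2}"
  have cb': "measure_pmf.prob (srcb n L \<delta>) ?S' \<le> measure_pmf.prob (binomial_pmf n (1 - \<delta>)) {k. ?t \<le> real k}
        + 2 powr (real F * ?t) * card {1..L} / (real L)^2"
    by (rule conv_bound[OF L d len]) auto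
  have "x \<in> ?S' \<union> ?E'" for x
  proof -
    obtain w1 w2 B where x: "x = (w1,w2,B)" by (cases x) auto
    show ?thesis unfolding x by (simp add: sel_def)
  qed
  hence u': "?S' \<union> ?E' = UNIV" by blast
  have "1 = measure_pmf.prob (srcb n L \<delta>) (?S' \<union> ?E')"
    unfolding u' by simp
  also have "\<dots> \<le> measure_pmf.prob (srcb n L \<delta>) ?S' + measure_pmf.prob (srcb n L \<delta>) ?E'"
    by (rule measure_Un_le) auto
  finally have "1 \<le> measure_pmf.prob (srcb n L \<delta>) ?S' + measure_pmf.prob (srcb n L \<delta>) ?E'" .
  moreover have "measure_pmf.prob (srcb n L \<delta>) ?E' \<le> err_prob n L q f g dec1 dec2 (1,1)"
    by (rule err_prob_parts(3)[OF q1 q2])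
  ultimately show "1 - \<epsilon> \<le> exp (- (2 * real n * \<eta>^2)) + 2 powr (real F * ?t) * real L / (real L)^2"
    using cb' tail e11 by simp
qed


lemma powr_combine:
  "(2::real) powr (real F * (real n * (p + \<eta>))) * 2 powr (real n * M) / (2 powr (real n * R))^2
     = 2 powr (real n * (real F * (p + \<eta>) + M - 2 * R))"
proof -
  have "(2 powr (real n * R))^2 = (2::real) powr (2 * (real n * R))"
    by (simp add: powr_realpow[symmetric] powr_powr mult.commute)
  thus ?thesis by (simp add: powr_add[symmetric] powr_diff[symmetric] algebra_simps)
qed

lemma powr_combine1:
  "(2::real) powr (real F * (real n * (p + \<eta>))) / 2 powr (real n * R)
     = 2 powr (real n * (real F * (p + \<eta>) - R))"
  by (simp add: powr_diff[symmetric] algebra_simps)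

lemma converse1:
  assumes F: "F > 0" and d: "0 < \<delta>" "\<delta> < 1"
    and q1: "measure_pmf.prob q {e. fst e} = \<delta>" and q2: "measure_pmf.prob q {e. snd e} = \<delta>"
    and ach: "achievable F q R M"
  shows "R \<le> real F * (1 - \<delta>)"
proof (rule ccontr)
  assume "\<not> ?thesis"
  hence Rc: "R > real F * (1 - \<delta>)" by simp
  define \<eta> where "\<eta> = (R - real F * (1 - \<delta>)) / (2 * real F)"
  have \<eta>: "\<eta> > 0" using Rc F unfolding \<eta>_def by auto
  define a where "a = real F * ((1 - \<delta>) + \<eta>) - R"
  have Fe: "real F * \<eta> = (R - real F * (1 - \<delta>)) / 2" using F unfolding \<eta>_def by (simp add: field_simps)
  have a: "a < 0" using Rc Fe unfolding a_def by (simp add: algebra_simps)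
  have R0: "R > 0" using Rc F d by (smt (verit) mult_nonneg_nonneg of_nat_0_le_iff)
  have ev: "eventually (\<lambda>n. exp (- (2 * real n * \<eta>^2)) < 1/4 \<and> 2 powr (real n * a) < 1/8
             \<and> 2 \<le> 2 powr (real n * R) \<and> n > 0) sequentially"
  proof -
    have e1: "eventually (\<lambda>n. exp (- (2 * real n * \<eta>^2)) < 1/4) sequentially"
      using order_tendstoD(2)[OF lim1[OF \<eta>], of "1/4"] by simp
    have e2: "eventually (\<lambda>n. 2 powr (real n * a) < 1/8) sequentially"
      using order_tendstoD(2)[OF lim2[OF a], of "1/8"] by simp
    have e4: "eventually (\<lambda>n::nat. n > 0) sequentially" by (rule eventually_gt_at_top)
    show ?thesis by (intro eventually_conj e1 e2 ev3[OF R0] e4)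
  qed
  then obtain N where N: "\<And>n. n \<ge> N \<Longrightarrow> exp (- (2 * real n * \<eta>^2)) < 1/4 \<and> 2 powr (real n * a) < 1/8
             \<and> 2 \<le> 2 powr (real n * R) \<and> n > 0"
    unfolding eventually_sequentially by blast
  obtain n f g dec1 dec2 where n: "n \<ge> N" and vc: "valid_code F n (msg_size n R) (msg_size n M) f g"
    and err: "\<forall>d\<in>{1,2} \<times> {1,2}. err_prob n (msg_size n R) q f g dec1 dec2 d < 1/4"
    using ach unfolding achievable_def by (metis divide_pos_pos zero_less_numeral zero_less_one)
  define L where "L = msg_size n R"
  define X where "X = (2::real) powr (real n * R)"
  have Nn: "exp (- (2 * real n * \<eta>^2)) < 1/4" "2 powr (real n * a) < 1/8" "2 \<le> X" "n > 0"
    using N[OF n] unfolding X_def by auto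
  have L1: "L \<ge> 1" unfolding L_def using msg_size_pos R0 by auto
  have LX: "real L \<ge> X / 2" using msg_size_ge[of n R] Nn(3) unfolding L_def X_def by linarith
  have Xp: "X > 0" unfolding X_def by simp
  have "1 - 1/4 \<le> exp (- (2 * real n * \<eta>^2)) + 2 powr (real F * (real n * ((1 - \<delta>) + \<eta>))) * real L / (real L)^2"
    by (rule conv_step(2)[OF q1 q2 _ _ vc[folded L_def] L1 Nn(4) less_imp_le[OF \<eta>]])
       (use d err in \<open>auto simp: L_def\<close>)
  also have "2 powr (real F * (real n * ((1 - \<delta>) + \<eta>))) * real L / (real L)^2
      = 2 powr (real F * (real n * ((1 - \<delta>) + \<eta>))) / real L"
    using L1 by (simp add: power2_eq_square)
  also have "\<dots> \<le> 2 powr (real F * (real n * ((1 - \<delta>) + \<eta>))) / (X / 2)"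
    using LX Xp by (intro divide_left_mono) auto
  also have "\<dots> = 2 * 2 powr (real n * a)"
    using powr_combine1[of F n "1 - \<delta>" \<eta> R] unfolding X_def a_def by (simp add: field_simps)
  finally show False using Nn by linarith
qed

lemma converse2:
  assumes F: "F > 0" and d: "0 < \<delta>" "\<delta> < 1" and M: "M \<ge> 0"
    and q1: "measure_pmf.prob q {e. fst e} = \<delta>" and q2: "measure_pmf.prob q {e. snd e} = \<delta>"
    and ach: "achievable F q R M"
  shows "2 * R \<le> real F * (1 - \<delta>) + M"
proof (rule ccontr)
  assume "\<not> ?thesis"
  hence Rc: "2 * R > real F * (1 - \<delta>) + M" by simp
  define \<eta> where "\<eta> = (2 * R - real F * (1 - \<delta>) - M) / (2 * real F)"
  have \<eta>: "\<eta> > 0" using Rc F unfolding \<eta>_def by auto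
  define a where "a = real F * ((1 - \<delta>) + \<eta>) + M - 2 * R"
  have Fe: "real F * \<eta> = (2 * R - real F * (1 - \<delta>) - M) / 2" using F unfolding \<eta>_def by (simp add: field_simps)
  have a: "a < 0" using Rc Fe unfolding a_def by (simp add: algebra_simps)
  have R0: "R > 0" using Rc F d M by (smt (verit) mult_nonneg_nonneg of_nat_0_le_iff)
  have ev: "eventually (\<lambda>n. exp (- (2 * real n * \<eta>^2)) < 1/4 \<and> 2 powr (real n * a) < 1/16
             \<and> 2 \<le> 2 powr (real n * R) \<and> n > 0) sequentially"
  proof -
    have e1: "eventually (\<lambda>n. exp (- (2 * real n * \<eta>^2)) < 1/4) sequentially"
      using order_tendstoD(2)[OF lim1[OF \<eta>], of "1/4"] by simp
    have e2: "eventually (\<lambda>n. 2 powr (real n * a) < 1/16) sequentially"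
      using order_tendstoD(2)[OF lim2[OF a], of "1/16"] by simp
    have e4: "eventually (\<lambda>n::nat. n > 0) sequentially" by (rule eventually_gt_at_top)
    show ?thesis by (intro eventually_conj e1 e2 ev3[OF R0] e4)
  qed
  then obtain N where N: "\<And>n. n \<ge> N \<Longrightarrow> exp (- (2 * real n * \<eta>^2)) < 1/4 \<and> 2 powr (real n * a) < 1/16
             \<and> 2 \<le> 2 powr (real n * R) \<and> n > 0"
    unfolding eventually_sequentially by blast
  obtain n f g dec1 dec2 where n: "n \<ge> N" and vc: "valid_code F n (msg_size n R) (msg_size n M) f g"
    and err: "\<forall>d\<in>{1,2} \<times> {1,2}. err_prob n (msg_size n R) q f g dec1 dec2 d < 1/8"
    using ach unfolding achievable_def by (metis divide_pos_pos zero_less_numeral zero_less_one)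
  define L where "L = msg_size n R"
  define Lc where "Lc = msg_size n M"
  define X where "X = (2::real) powr (real n * R)"
  define P where "P = (2::real) powr (real F * (real n * ((1 - \<delta>) + \<eta>)))"
  have Nn: "exp (- (2 * real n * \<eta>^2)) < 1/4" "2 powr (real n * a) < 1/16" "2 \<le> X" "n > 0"
    using N[OF n] unfolding X_def by auto
  have L1: "L \<ge> 1" unfolding L_def using msg_size_pos R0 by auto
  have LX: "real L \<ge> X / 2" using msg_size_ge[of n R] Nn(3) unfolding L_def X_def by linarith
  have Xp: "X > 0" unfolding X_def by simp
  have Pp: "P > 0" unfolding P_def by simp
  have LcY: "real Lc \<le> 2 powr (real n * M)" unfolding Lc_def by (rule msg_size_le)
  have L2: "(real L)^2 \<ge> (X / 2)^2" using LX Xp by (intro power_mono) auto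
  have "1 - 2 * (1/8) \<le> exp (- (2 * real n * \<eta>^2)) + P * real Lc / (real L)^2"
    unfolding P_def
    by (rule conv_step(1)[OF q1 q2 _ _ vc[folded L_def Lc_def] L1 Nn(4) less_imp_le[OF \<eta>]])
       (use d err in \<open>auto simp: L_def\<close>)
  also have "P * real Lc / (real L)^2 \<le> P * 2 powr (real n * M) / (X / 2)^2"
    using LcY L2 Xp Pp by (intro frac_le mult_left_mono) auto
  also have "\<dots> = 4 * (P * 2 powr (real n * M) / X^2)"
    by (simp add: power2_eq_square field_simps)
  also have "P * 2 powr (real n * M) / X^2 = 2 powr (real n * a)"
    using powr_combine[of F n "1 - \<delta>" \<eta> M R] unfolding X_def a_def P_def by simp
  finally show False using Nn by linarith
qed

definition gc :: "nat \<Rightarrow> nat \<Rightarrow> nat \<Rightarrow> nat" where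
  "gc Lc w1 w2 = (w1 - 1 + (w2 - 1)) mod Lc + 1"

definition mmf :: "nat \<Rightarrow> nat \<Rightarrow> nat \<times> nat \<Rightarrow> nat \<Rightarrow> nat \<Rightarrow> nat" where
  "mmf L Lc d w1 w2 = (if fst d = snd d then sel (snd d) w1 w2 - 1
      else (sel (snd d) w1 w2 - 1) + L * ((sel (fst d) w1 w2 - 1) div Lc))"

definition r1f :: "nat \<Rightarrow> nat \<Rightarrow> nat \<times> nat \<Rightarrow> nat \<Rightarrow> nat \<Rightarrow> nat" where
  "r1f L Lc d m v = (if fst d = snd d then m mod L + 1
      else (m div L) * Lc + ((v - 1) + Lc - (m mod L) mod Lc) mod Lc + 1)"

definition r2f :: "nat \<Rightarrow> nat \<Rightarrow> nat" where
  "r2f L m = m mod L + 1"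

lemma encoding:
  assumes L: "L \<ge> 1" and Lc: "Lc \<ge> 1" and d: "d \<in> {1,2} \<times> {1,2}" and w: "w1 \<in> {1..L}" "w2 \<in> {1..L}"
  shows "mmf L Lc d w1 w2 < L * ((L - 1) div Lc + 1)"
    and "r2f L (mmf L Lc d w1 w2) = sel (snd d) w1 w2"
    and "r1f L Lc d (mmf L Lc d w1 w2) (gc Lc w1 w2) = sel (fst d) w1 w2"
proof -
  define a where "a = sel (fst d) w1 w2 - 1"
  define b where "b = sel (snd d) w1 w2 - 1"
  have sa: "sel (fst d) w1 w2 = a + 1" and sb: "sel (snd d) w1 w2 = b + 1"
    using w unfolding a_def b_def sel_def by auto
  have aL: "a < L" and bL: "b < L" using w unfolding a_def b_def sel_def by auto
  have adiv: "a div Lc \<le> (L - 1) div Lc" using aL by (intro div_le_mono) auto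
  show "mmf L Lc d w1 w2 < L * ((L - 1) div Lc + 1)"
  proof (cases "fst d = snd d")
    case True
    thus ?thesis unfolding mmf_def b_def[symmetric] using bL by (simp add: algebra_simps)
  next
    case False
    have "b + L * (a div Lc) < L + L * (a div Lc)" using bL by simp
    also have "\<dots> \<le> L + L * ((L - 1) div Lc)" using adiv by simp
    finally show ?thesis unfolding mmf_def using False a_def b_def by (simp add: algebra_simps)
  qed
  have m2: "(b + L * (a div Lc)) mod L = b" "(b + L * (a div Lc)) div L = a div Lc"
  proof -
    have "(b + L * (a div Lc)) mod L = b mod L" by (rule mod_mult_self2)
    also have "\<dots> = b" using bL by (rule mod_less)
    finally show "(b + L * (a div Lc)) mod L = b" .
    have "(b + L * (a div Lc)) div L = a div Lc + b div L" using L by (intro div_mult_self2) auto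
    also have "b div L = 0" using bL by (rule div_less)
    finally show "(b + L * (a div Lc)) div L = a div Lc" by simp
  qed
  have mm_eq: "mmf L Lc d w1 w2 = (if fst d = snd d then b else b + L * (a div Lc))"
    unfolding mmf_def a_def b_def by simp
  show "r2f L (mmf L Lc d w1 w2) = sel (snd d) w1 w2"
    unfolding r2f_def mm_eq using bL m2 sb by simp
  have ab: "fst d \<noteq> snd d \<Longrightarrow> w1 - 1 + (w2 - 1) = a + b"
    using d unfolding a_def b_def sel_def by auto
  show "r1f L Lc d (mmf L Lc d w1 w2) (gc Lc w1 w2) = sel (fst d) w1 w2"
  proof (cases "fst d = snd d")
    case True
    thus ?thesis unfolding r1f_def mm_eq using bL sa sb by simp
  next
    case False
    have "gc Lc w1 w2 - 1 = (a + b) mod Lc" unfolding gc_def ab[OF False] by simp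
    hence "((gc Lc w1 w2 - 1) + Lc - (b mod L) mod Lc) mod Lc = a mod Lc"
      using modfix[of Lc a b] Lc bL by simp
    hence "r1f L Lc d (mmf L Lc d w1 w2) (gc Lc w1 w2) = (a div Lc) * Lc + a mod Lc + 1"
      unfolding r1f_def mm_eq using False m2 by simp
    thus ?thesis using sa by simp
  qed
qed

lemma T_bound:
  assumes L: "real L \<le> X" and Lc: "real Lc \<ge> Y / 2" and Y: "Y > 0" and Lc1: "Lc \<ge> 1"
  shows "real (L * ((L - 1) div Lc + 1)) \<le> 2 * (X^2 / Y) + X"
proof -
  have "real ((L - 1) div Lc) \<le> real (L - 1) / real Lc" by (rule of_nat_div_le_of_nat)
  also have "\<dots> \<le> real L / real Lc" using Lc1 by (intro divide_right_mono) auto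
  finally have q: "real ((L - 1) div Lc) \<le> real L / real Lc" .
  have "real (L * ((L - 1) div Lc + 1)) = real L * real ((L - 1) div Lc) + real L" by (simp add: algebra_simps)
  also have "\<dots> \<le> real L * (real L / real Lc) + real L" using q by (intro add_mono mult_left_mono) auto
  also have "real L * (real L / real Lc) \<le> X * X / (Y / 2)"
  proof -
    have "real L * (real L / real Lc) = real L * real L / real Lc" by simp
    also have "\<dots> \<le> X * X / real Lc" using L by (intro divide_right_mono mult_mono) auto
    also have "\<dots> \<le> X * X / (Y / 2)" using Lc Y by (intro divide_left_mono) auto
    finally show ?thesis .
  qed
  finally show ?thesis using L by (simp add: power2_eq_square field_simps)
qed

lemma achievability:
  assumes F: "F > 0" and d: "0 < \<delta>" "\<delta> < 1" and M: "M \<ge> 0"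
    and q1: "measure_pmf.prob q {e. fst e} = \<delta>" and q2: "measure_pmf.prob q {e. snd e} = \<delta>"
    and R0: "R > 0" and R1: "R < real F * (1 - \<delta>)" and R2: "2 * R - M < real F * (1 - \<delta>)"
  shows "achievable F q R M"
  unfolding achievable_def
proof (intro allI impI)
  fix \<epsilon> :: real and N :: nat assume \<epsilon>: "\<epsilon> > 0"
  define c where "c = real F * (1 - \<delta>)"
  define \<eta> where "\<eta> = min (c - R) (c - (2 * R - M)) / (2 * real F)"
  have \<eta>: "\<eta> > 0" using R1 R2 F unfolding \<eta>_def c_def by auto
  have Fe: "real F * \<eta> = min (c - R) (c - (2 * R - M)) / 2" using F unfolding \<eta>_def by (simp add: field_simps)
  define a1 where "a1 = R - real F * ((1 - \<delta>) - \<eta>)"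
  define a2 where "a2 = (2 * R - M) - real F * ((1 - \<delta>) - \<eta>)"
  have a1: "a1 < 0" using Fe R1 R2 unfolding a1_def c_def by (simp add: algebra_simps min_def split: if_splits)
  have a2: "a2 < 0" using Fe R1 R2 unfolding a2_def c_def by (simp add: algebra_simps min_def split: if_splits)
  have ev: "eventually (\<lambda>n. exp (- (2 * real n * \<eta>^2)) < \<epsilon>/8 \<and> 2 powr (real n * a1) < \<epsilon>/16
      \<and> 2 powr (real n * a2) < \<epsilon>/32 \<and> n > 0 \<and> n \<ge> N) sequentially"
  proof -
    have e1: "eventually (\<lambda>n. exp (- (2 * real n * \<eta>^2)) < \<epsilon>/8) sequentially"
      using order_tendstoD(2)[OF lim1[OF \<eta>], of "\<epsilon>/8"] \<epsilon> by simp
    have e2: "eventually (\<lambda>n. 2 powr (real n * a1) < \<epsilon>/16) sequentially"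
      using order_tendstoD(2)[OF lim2[OF a1], of "\<epsilon>/16"] \<epsilon> by simp
    have e3: "eventually (\<lambda>n. 2 powr (real n * a2) < \<epsilon>/32) sequentially"
      using order_tendstoD(2)[OF lim2[OF a2], of "\<epsilon>/32"] \<epsilon> by simp
    have e4: "eventually (\<lambda>n::nat. n > 0) sequentially" by (rule eventually_gt_at_top)
    have e5: "eventually (\<lambda>n::nat. n \<ge> N) sequentially" by (rule eventually_ge_at_top)
    show ?thesis by (intro eventually_conj e1 e2 e3 e4 e5)
  qed
  then obtain N' where N': "\<And>n. n \<ge> N' \<Longrightarrow> exp (- (2 * real n * \<eta>^2)) < \<epsilon>/8 \<and> 2 powr (real n * a1) < \<epsilon>/16
      \<and> 2 powr (real n * a2) < \<epsilon>/32 \<and> n > 0 \<and> n \<ge> N"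
    unfolding eventually_sequentially by blast
  define n where "n = N'"
  have nn: "exp (- (2 * real n * \<eta>^2)) < \<epsilon>/8" "2 powr (real n * a1) < \<epsilon>/16"
      "2 powr (real n * a2) < \<epsilon>/32" "n > 0" "n \<ge> N"
    using N'[of n] unfolding n_def by auto
  define L where "L = msg_size n R"
  define Lc where "Lc = msg_size n M"
  define T where "T = L * ((L - 1) div Lc + 1)"
  define t where "t = real n * ((1 - \<delta>) - \<eta>)"
  define \<beta> where "\<beta> = measure_pmf.prob (binomial_pmf n (1 - \<delta>)) {k. real k \<le> t} + real T * 2 powr (- (real F * t))"
  have L1: "L \<ge> 1" unfolding L_def using msg_size_pos R0 by auto
  have Lc1: "Lc \<ge> 1" unfolding Lc_def using msg_size_pos M by auto
  have T1: "T \<ge> 1" unfolding T_def using L1 by simp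
  have Tb: "real T \<le> 2 * (2 powr (real n * R))^2 / 2 powr (real n * M) + 2 powr (real n * R)"
  proof -
    have LcY: "real Lc \<ge> 2 powr (real n * M) / 2"
      using msg_size_ge[of n M] Lc1 unfolding Lc_def by linarith
    show ?thesis unfolding T_def
      using T_bound[OF msg_size_le[of n R, folded L_def] LcY _ Lc1] by simp
  qed
  have pb: "measure_pmf.prob (binomial_pmf n (1 - \<delta>)) {k. real k \<le> t} \<le> exp (- (2 * real n * \<eta>^2))"
    unfolding t_def by (rule prob_bin_tail_le) (use nn d \<eta> in auto)
  have e2': "(2 powr (real n * R))^2 / 2 powr (real n * M) * 2 powr (- (real F * t)) = 2 powr (real n * a2)"
  proof -
    have "(2 powr (real n * R))^2 = (2::real) powr (2 * (real n * R))"
      by (simp add: powr_realpow[symmetric] powr_powr mult.commute)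
    thus ?thesis unfolding a2_def t_def by (simp add: powr_add[symmetric] powr_diff[symmetric] algebra_simps)
  qed
  have e1': "2 powr (real n * R) * 2 powr (- (real F * t)) = 2 powr (real n * a1)"
    unfolding a1_def t_def by (simp add: powr_add[symmetric] algebra_simps)
  have "real T * 2 powr (- (real F * t)) \<le> (2 * (2 powr (real n * R))^2 / 2 powr (real n * M) + 2 powr (real n * R)) * 2 powr (- (real F * t))"
    using Tb by (intro mult_right_mono) auto
  also have "\<dots> = 2 * 2 powr (real n * a2) + 2 powr (real n * a1)"
    using e1' e2' by (simp add: algebra_simps)
  finally have Tt: "real T * 2 powr (- (real F * t)) \<le> 2 * 2 powr (real n * a2) + 2 powr (real n * a1)" .
  have "\<beta> \<le> exp (- (2 * real n * \<eta>^2)) + (2 * 2 powr (real n * a2) + 2 powr (real n * a1))"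
    unfolding \<beta>_def using pb Tt by (rule add_mono)
  hence \<beta>b: "2 * \<beta> < \<epsilon>" using nn \<epsilon> by linarith
  have "\<forall>d. \<exists>C. (\<forall>m i. length (C m i) = F) \<and> (d \<in> {1,2} \<times> {1,2} \<longrightarrow>
     measure_pmf.prob (srcb n L \<delta>) {(w1,w2,B). (w1,w2) \<notin> {1..L} \<times> {1..L} \<or>
        (\<exists>m'<T. m' \<noteq> mmf L Lc d w1 w2 \<and> agree n B (C m') (C (mmf L Lc d w1 w2)))} \<le> \<beta>)"
  proof
    fix d :: "nat \<times> nat"
    show "\<exists>C. (\<forall>m i. length (C m i) = F) \<and> (d \<in> {1,2} \<times> {1,2} \<longrightarrow>
     measure_pmf.prob (srcb n L \<delta>) {(w1,w2,B). (w1,w2) \<notin> {1..L} \<times> {1..L} \<or>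
        (\<exists>m'<T. m' \<noteq> mmf L Lc d w1 w2 \<and> agree n B (C m') (C (mmf L Lc d w1 w2)))} \<le> \<beta>)"
    proof (cases "d \<in> {1,2} \<times> {1,2}")
      case True
      have "\<exists>C. (\<forall>m i. length (C m i) = F) \<and>
        measure_pmf.prob (srcb n L \<delta>) {(w1,w2,B). (w1,w2) \<notin> {1..L} \<times> {1..L} \<or>
        (\<exists>m'<T. m' \<noteq> mmf L Lc d w1 w2 \<and> agree n B (C m') (C (mmf L Lc d w1 w2)))} \<le> \<beta>"
        unfolding \<beta>_def
        by (rule ach_bound[OF T1 L1]) (use d encoding(1)[OF L1 Lc1 True] in \<open>auto simp: T_def\<close>)
      thus ?thesis by blast
    next
      case False
      have "\<exists>C. (\<forall>m i. length (C m i) = F) \<and>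
        measure_pmf.prob (srcb n L \<delta>) {(w1,w2,B). (w1,w2) \<notin> {1..L} \<times> {1..L} \<or>
        (\<exists>m'<T. m' \<noteq> (\<lambda>_ _. 0) w1 w2 \<and> agree n B (C m') (C ((\<lambda>_ _. 0) w1 w2)))} \<le> \<beta>"
        unfolding \<beta>_def by (rule ach_bound[OF T1 L1]) (use d T1 in auto)
      thus ?thesis using False by blast
    qed
  qed
  hence "\<exists>Cf. \<forall>d. (\<forall>m i. length (Cf d m i) = F) \<and> (d \<in> {1,2} \<times> {1,2} \<longrightarrow>
     measure_pmf.prob (srcb n L \<delta>) {(w1,w2,B). (w1,w2) \<notin> {1..L} \<times> {1..L} \<or>
        (\<exists>m'<T. m' \<noteq> mmf L Lc d w1 w2 \<and> agree n B (Cf d m') (Cf d (mmf L Lc d w1 w2)))} \<le> \<beta>)"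
    by (rule choice)
  then obtain Cf where Cf0: "\<forall>d. (\<forall>m i. length (Cf d m i) = F) \<and> (d \<in> {1,2} \<times> {1,2} \<longrightarrow>
     measure_pmf.prob (srcb n L \<delta>) {(w1,w2,B). (w1,w2) \<notin> {1..L} \<times> {1..L} \<or>
        (\<exists>m'<T. m' \<noteq> mmf L Lc d w1 w2 \<and> agree n B (Cf d m') (Cf d (mmf L Lc d w1 w2)))} \<le> \<beta>)"
    by (elim exE)
  have Cf: "\<And>d. (\<forall>m i. length (Cf d m i) = F)"
    "\<And>d. d \<in> {1,2} \<times> {1,2} \<Longrightarrow>
     measure_pmf.prob (srcb n L \<delta>) {(w1,w2,B). (w1,w2) \<notin> {1..L} \<times> {1..L} \<or>
        (\<exists>m'<T. m' \<noteq> mmf L Lc d w1 w2 \<and> agree n B (Cf d m') (Cf d (mmf L Lc d w1 w2)))} \<le> \<beta>"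
    using Cf0 by blast+
  define f where "f = (\<lambda>d w1 w2. Cf d (mmf L Lc d w1 w2))"
  define dec1 :: "nat \<times> nat \<Rightarrow> (nat \<Rightarrow> bool list option) \<Rightarrow> nat \<Rightarrow> nat" where "dec1 = (\<lambda>d Y v. r1f L Lc d (decm (Cf d) T Y) v)"
  define dec2 :: "nat \<times> nat \<Rightarrow> (nat \<Rightarrow> bool list option) \<Rightarrow> nat" where "dec2 = (\<lambda>d Y. r2f L (decm (Cf d) T Y))"
  have vc: "valid_code F n L Lc f (gc Lc)"
    unfolding valid_code_def f_def gc_def using Cf(1) Lc1 by (auto simp: Suc_le_eq)
  have err: "\<forall>d\<in>{1,2} \<times> {1,2}. err_prob n L q f (gc Lc) dec1 dec2 d < \<epsilon>"
  proof
    fix d :: "nat \<times> nat" assume dd: "d \<in> {1,2} \<times> {1,2}"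
    have "err_prob n L q f (gc Lc) dec1 dec2 d \<le> 2 * \<beta>"
      by (rule ach_demand[where ra="r1f L Lc d" and rb="r2f L" and mm="mmf L Lc d" and T=T and C="Cf d"])
         (use q1 q2 encoding(3)[OF L1 Lc1 dd] encoding(2)[OF L1 Lc1 dd] encoding(1)[OF L1 Lc1 dd] Cf(2)[OF dd]
          in \<open>auto simp: f_def dec1_def dec2_def T_def\<close>)
    thus "err_prob n L q f (gc Lc) dec1 dec2 d < \<epsilon>" using \<beta>b by linarith
  qed
  show "\<exists>n\<ge>N. \<exists>f g dec1 dec2. valid_code F n (msg_size n R) (msg_size n M) f g \<and>
        (\<forall>d\<in>{1,2} \<times> {1,2}. err_prob n (msg_size n R) q f g dec1 dec2 d < \<epsilon>)"
    using vc err nn(5) unfolding L_def Lc_def by blast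
qed

theorem corollary4:
  fixes F :: nat and \<delta> M :: real and q :: "(bool \<times> bool) pmf"
  assumes "F > 0" and "0 < \<delta>" and "\<delta> < 1"
    and "measure_pmf.prob q {e. fst e} = \<delta>"
    and "measure_pmf.prob q {e. snd e} = \<delta>"
    and "0 \<le> M / 2" and "M / 2 \<le> real F * (1 - \<delta>)"
  shows "capacity F q M =
           (if M / 2 \<le> real F * (1 - \<delta>) / 2
            then real F * (1 - \<delta>) / 2 + M / 2
            else real F * (1 - \<delta>))"
proof -
  note F = assms(1) and d = assms(2,3) and q1 = assms(4) and q2 = assms(5)
  have M: "M \<ge> 0" using assms(6) by simp
  define c where "c = real F * (1 - \<delta>)"
  have c: "c > 0" unfolding c_def using F d by simp
  define Cv where "Cv = min c ((c + M) / 2)"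
  have rhs: "(if M / 2 \<le> real F * (1 - \<delta>) / 2 then real F * (1 - \<delta>) / 2 + M / 2 else real F * (1 - \<delta>)) = Cv"
    unfolding Cv_def c_def[symmetric] by (auto simp: min_def field_simps)
  have Cv: "Cv > 0" unfolding Cv_def using c M by simp
  have ach: "\<And>R. 0 < R \<Longrightarrow> R < Cv \<Longrightarrow> achievable F q R M"
    by (rule achievability[OF F d M q1 q2]) (auto simp: Cv_def c_def)
  have ub: "\<And>R. achievable F q R M \<Longrightarrow> R \<le> Cv"
  proof -
    fix R assume a: "achievable F q R M"
    have "R \<le> c" unfolding c_def by (rule converse1[OF F d q1 q2 a])
    moreover have "2 * R \<le> c + M" unfolding c_def by (rule converse2[OF F d M q1 q2 a])
    ultimately show "R \<le> Cv" unfolding Cv_def by simp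
  qed
  have "Sup {R. achievable F q R M} = Cv"
  proof (rule cSup_eq_non_empty)
    show "{R. achievable F q R M} \<noteq> {}" using ach[of "Cv / 2"] Cv by auto
    show "\<And>x. x \<in> {R. achievable F q R M} \<Longrightarrow> x \<le> Cv" using ub by auto
    fix y assume y: "\<And>x. x \<in> {R. achievable F q R M} \<Longrightarrow> x \<le> y"
    show "Cv \<le> y"
    proof (rule ccontr)
      assume "\<not> Cv \<le> y"
      hence yl: "y < Cv" by simp
      define R where "R = (max y 0 + Cv) / 2"
      have "0 < R" "R < Cv" unfolding R_def using yl Cv by auto
      hence "achievable F q R M" by (rule ach)
      hence "R \<le> y" using y by auto
      thus False unfolding R_def using yl Cv by auto
    qed
  qed
  thus ?thesis unfolding capacity_def rhs .
qed

end
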